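(* Let $K\ge1$, $A=\{1,\dots,K\}$, let $d\ge1$ be an integer, $0<\delta\le 1/d$ and $0<\eta\le\frac{1}{Ke(d+1)}$. Consider the update: $w_1(i)=1$, $W_t=\sum_j w_t(j)$, $\widetilde p_t(i)=\max\{w_t(i)/W_t,\delta/K\}$, $\widetilde P_t=\sum_j\widetilde p_t(j)$, $p_t(i)=\widetilde p_t(i)/\widetilde P_t$, $w_{t+1}(i)=p_t(i)\exp(-\eta\widehat\ell_t(i))$, where $$\widehat\ell_t(i)=\begin{cases}\dfrac{\ell_{t-d}(i)}{q_{t-d}(i)}B_{t-d}(i)&t>d,\\0&\text{otherwise,}\end{cases}$$ with $\ell_s(i)\in[0,1]$, $B_s(i)\in\{0,1\}$ and $q_s(i)\ge p_s(i)$ for all $s,i$. Then for all $t\ge1$ and $i\in A$, $$p_{t+1}(i)\le\Bigl(1+\frac1d\Bigr)p_t(i).$$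
   Context: The statement holds deterministically for every realization of the $\ell_s,B_s,q_s$ satisfying the stated conditions. *)

theory Defs
  imports Complex_Main
begin

text \<open>Arms are A = {1..K}; rounds are indexed from 1.
  Losses l s i, indicators B s i and q s i are arbitrary real-valued sequences.\<close>

definition loss_est :: "nat \<Rightarrow> (nat \<Rightarrow> nat \<Rightarrow> real) \<Rightarrow> (nat \<Rightarrow> nat \<Rightarrow> real)
    \<Rightarrow> (nat \<Rightarrow> nat \<Rightarrow> real) \<Rightarrow> nat \<Rightarrow> nat \<Rightarrow> real" where
  "loss_est d l B q t i =
     (if t > d then l (t - d) i / q (t - d) i * B (t - d) i else 0)"

definition ptilde :: "nat \<Rightarrow> real \<Rightarrow> (nat \<Rightarrow> real) \<Rightarrow> nat \<Rightarrow> real" where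
  "ptilde K \<delta> w i = max (w i / (\<Sum>j\<in>{1..K}. w j)) (\<delta> / real K)"

definition pnorm :: "nat \<Rightarrow> real \<Rightarrow> (nat \<Rightarrow> real) \<Rightarrow> nat \<Rightarrow> real" where
  "pnorm K \<delta> w i = ptilde K \<delta> w i / (\<Sum>j\<in>{1..K}. ptilde K \<delta> w j)"

text \<open>wseq ... n is the weight vector w_{n+1}.\<close>
primrec wseq :: "nat \<Rightarrow> real \<Rightarrow> real \<Rightarrow> nat \<Rightarrow> (nat \<Rightarrow> nat \<Rightarrow> real)
    \<Rightarrow> (nat \<Rightarrow> nat \<Rightarrow> real) \<Rightarrow> (nat \<Rightarrow> nat \<Rightarrow> real) \<Rightarrow> nat \<Rightarrow> nat \<Rightarrow> real" where
  "wseq K \<delta> \<eta> d l B q 0 = (\<lambda>i. 1)"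
| "wseq K \<delta> \<eta> d l B q (Suc n) =
     (\<lambda>i. pnorm K \<delta> (wseq K \<delta> \<eta> d l B q n) i * exp (- \<eta> * loss_est d l B q (Suc n) i))"

definition wt :: "nat \<Rightarrow> real \<Rightarrow> real \<Rightarrow> nat \<Rightarrow> (nat \<Rightarrow> nat \<Rightarrow> real)
    \<Rightarrow> (nat \<Rightarrow> nat \<Rightarrow> real) \<Rightarrow> (nat \<Rightarrow> nat \<Rightarrow> real) \<Rightarrow> nat \<Rightarrow> nat \<Rightarrow> real" where
  "wt K \<delta> \<eta> d l B q t = wseq K \<delta> \<eta> d l B q (t - 1)"

definition prob :: "nat \<Rightarrow> real \<Rightarrow> real \<Rightarrow> nat \<Rightarrow> (nat \<Rightarrow> nat \<Rightarrow> real)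
    \<Rightarrow> (nat \<Rightarrow> nat \<Rightarrow> real) \<Rightarrow> (nat \<Rightarrow> nat \<Rightarrow> real) \<Rightarrow> nat \<Rightarrow> nat \<Rightarrow> real" where
  "prob K \<delta> \<eta> d l B q t i = pnorm K \<delta> (wt K \<delta> \<eta> d l B q t) i"

end

theory Submission
  imports Defs
begin

lemma ptilde_ge: "\<delta> / real K \<le> ptilde K \<delta> w i"
  by (simp add: ptilde_def)

lemma sum_ptilde_ge_delta:
  assumes "K \<ge> 1" "\<delta> > 0"
  shows "(\<Sum>j\<in>{1..K}. ptilde K \<delta> w j) \<ge> \<delta>"
proof -
  have "(\<Sum>j\<in>{1..K}. ptilde K \<delta> w j) \<ge> (\<Sum>j\<in>{1..K}. \<delta> / real K)"
    by (rule sum_mono) (simp add: ptilde_ge)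
  moreover have "(\<Sum>j\<in>{1..K}. \<delta> / real K) = \<delta>" using assms by simp
  ultimately show ?thesis by simp
qed

lemma pnorm_pos:
  assumes "K \<ge> 1" "\<delta> > 0"
  shows "pnorm K \<delta> w i > 0"
proof -
  have "ptilde K \<delta> w i > 0" using ptilde_ge[of \<delta> K w i] assms
    by (smt (verit) divide_pos_pos of_nat_0_less_iff less_le_trans zero_less_one)
  then show ?thesis unfolding pnorm_def using sum_ptilde_ge_delta[OF assms, of w] assms by simp
qed

lemma sum_pnorm:
  assumes "K \<ge> 1" "\<delta> > 0"
  shows "(\<Sum>j\<in>{1..K}. pnorm K \<delta> w j) = 1"
  unfolding pnorm_def using sum_ptilde_ge_delta[OF assms, of w] assms
  by (simp add: sum_divide_distrib[symmetric])

lemma sum_ptilde_ge1: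
  assumes "K \<ge> 1" "\<forall>j\<in>{1..K}. w j > 0"
  shows "(\<Sum>j\<in>{1..K}. ptilde K \<delta> w j) \<ge> 1"
proof -
  have W: "(\<Sum>j\<in>{1..K}. w j) > 0" using assms by (intro sum_pos) auto
  have "(\<Sum>j\<in>{1..K}. ptilde K \<delta> w j) \<ge> (\<Sum>j\<in>{1..K}. w j / (\<Sum>j\<in>{1..K}. w j))"
    by (rule sum_mono) (simp add: ptilde_def)
  moreover have "(\<Sum>j\<in>{1..K}. w j / (\<Sum>j\<in>{1..K}. w j)) = 1"
    using W by (simp add: sum_divide_distrib[symmetric])
  ultimately show ?thesis by simp
qed

lemma sum_ptilde_le:
  assumes "K \<ge> 1" "\<delta> > 0" "\<forall>j\<in>{1..K}. w j > 0"
  shows "(\<Sum>j\<in>{1..K}. ptilde K \<delta> w j) \<le> 1 + \<delta>"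
proof -
  have W: "(\<Sum>j\<in>{1..K}. w j) > 0" using assms by (intro sum_pos) auto
  have "(\<Sum>j\<in>{1..K}. ptilde K \<delta> w j) \<le> (\<Sum>j\<in>{1..K}. w j / (\<Sum>j\<in>{1..K}. w j) + \<delta> / real K)"
  proof (rule sum_mono)
    fix j assume "j \<in> {1..K}"
    then have "w j / (\<Sum>j\<in>{1..K}. w j) \<ge> 0" using W assms
      by (meson divide_nonneg_pos less_imp_le)
    moreover have "\<delta> / real K \<ge> 0" using assms by simp
    ultimately show "ptilde K \<delta> w j \<le> w j / (\<Sum>j\<in>{1..K}. w j) + \<delta> / real K"
      unfolding ptilde_def by linarith
  qed
  also have "\<dots> = 1 + \<delta>"
    using W assms by (simp add: sum.distrib sum_divide_distrib[symmetric])
  finally show ?thesis .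
qed

lemma pnorm_le_ptilde:
  assumes "K \<ge> 1" "\<delta> > 0" "\<forall>j\<in>{1..K}. w j > 0"
  shows "pnorm K \<delta> w i \<le> ptilde K \<delta> w i"
proof -
  have S: "(\<Sum>j\<in>{1..K}. ptilde K \<delta> w j) \<ge> 1" using sum_ptilde_ge1[OF assms(1,3)] .
  have "ptilde K \<delta> w i \<ge> 0" using ptilde_ge[of \<delta> K w i] assms
    by (smt (verit) divide_nonneg_nonneg of_nat_0_le_iff)
  then have "ptilde K \<delta> w i / (\<Sum>j\<in>{1..K}. ptilde K \<delta> w j) \<le> ptilde K \<delta> w i / 1"
    using S by (intro divide_left_mono) auto
  then show ?thesis unfolding pnorm_def by simp
qed

lemma pnorm_ge:
  assumes "K \<ge> 1" "\<delta> > 0" "\<forall>j\<in>{1..K}. w j > 0"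
  shows "pnorm K \<delta> w i \<ge> \<delta> / real K / (1 + \<delta>)"
proof -
  have S: "(\<Sum>j\<in>{1..K}. ptilde K \<delta> w j) \<le> 1 + \<delta>" using sum_ptilde_le[OF assms] .
  have S1: "(\<Sum>j\<in>{1..K}. ptilde K \<delta> w j) \<ge> 1" using sum_ptilde_ge1[OF assms(1,3)] .
  have "\<delta> / real K / (1 + \<delta>) \<le> \<delta> / real K / (\<Sum>j\<in>{1..K}. ptilde K \<delta> w j)"
    using S S1 assms by (intro divide_left_mono) auto
  also have "\<dots> \<le> pnorm K \<delta> w i" unfolding pnorm_def using S1
    by (intro divide_right_mono ptilde_ge) auto
  finally show ?thesis .
qed

lemma pow_le_e:
  assumes "d \<ge> (1::nat)"
  shows "(1 + 1 / real d) ^ d \<le> exp 1"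
proof -
  have "1 + 1 / real d \<le> exp (1 / real d)" by (rule exp_ge_add_one_self)
  then have "(1 + 1 / real d) ^ d \<le> exp (1 / real d) ^ d"
    by (intro power_mono) (auto)
  also have "\<dots> = exp 1" using assms by (simp add: exp_of_nat_mult[symmetric])
  finally show ?thesis .
qed

theorem mainTheorem6:
  fixes K d :: nat and \<delta> \<eta> :: real and l B q :: "nat \<Rightarrow> nat \<Rightarrow> real"
  assumes "K \<ge> 1" and "d \<ge> 1"
    and "0 < \<delta>" and "\<delta> \<le> 1 / real d"
    and "0 < \<eta>" and "\<eta> \<le> 1 / (real K * exp 1 * (real d + 1))"
    and "\<And>s i. s \<ge> 1 \<Longrightarrow> i \<in> {1..K} \<Longrightarrow> 0 \<le> l s i \<and> l s i \<le> 1"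
    and "\<And>s i. s \<ge> 1 \<Longrightarrow> i \<in> {1..K} \<Longrightarrow> B s i \<in> {0, 1}"
    and "\<And>s i. s \<ge> 1 \<Longrightarrow> i \<in> {1..K} \<Longrightarrow> q s i \<ge> prob K \<delta> \<eta> d l B q s i"
  shows "\<forall>t\<ge>1. \<forall>i\<in>{1..K}.
           prob K \<delta> \<eta> d l B q (t + 1) i \<le> (1 + 1 / real d) * prob K \<delta> \<eta> d l B q t i"
proof -
  note K = assms(1) and dpos = assms(2) and dl = assms(3)
  define w where "w = wseq K \<delta> \<eta> d l B q"
  define p where "p = prob K \<delta> \<eta> d l B q"
  define L where "L = loss_est d l B q"
  define c where "c = 1 + 1 / real d"
  have p_eq: "p t = pnorm K \<delta> (w (t - 1))" for t
    unfolding p_def w_def prob_def wt_def by (rule ext) simp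
  have w_suc: "w (Suc n) i = p (Suc n) i * exp (- \<eta> * L (Suc n) i)" for n i
    by (simp add: w_def p_eq L_def)
  have ppos: "p t i > 0" for t i using pnorm_pos[OF K dl] p_eq by simp
  have wpos: "w n i > 0" for n i
  proof (cases n)
    case 0 then show ?thesis by (simp add: w_def)
  next
    case (Suc m) then show ?thesis using ppos[of "Suc m" i] w_suc[of m i] by simp
  qed
  have psum: "(\<Sum>j\<in>{1..K}. p t j) = 1" for t using sum_pnorm[OF K dl] p_eq by simp
  have pge: "p t i \<ge> \<delta> / real K / (1 + \<delta>)" for t i
    using pnorm_ge[OF K dl] wpos p_eq by simp
  have Lnn: "L t j \<ge> 0" if "j \<in> {1..K}" for t j
  proof (cases "t > d")
    case True
    then have s: "t - d \<ge> 1" by simp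
    have "q (t - d) j > 0" using assms(9)[OF s that] ppos[of "t-d" j] p_def by force
    moreover have "l (t - d) j \<ge> 0" using assms(7)[OF s that] by simp
    moreover have "B (t - d) j \<ge> 0" using assms(8)[OF s that] by auto
    ultimately show ?thesis using True by (simp add: L_def loss_est_def)
  qed (simp add: L_def loss_est_def)
  have cpos: "c > 1" using dpos by (simp add: c_def)
  have step: "\<forall>i\<in>{1..K}. p (t + 1) i \<le> c * p t i" if "t \<ge> 1" for t
    using that
  proof (induction t rule: less_induct)
    case (less t)
    have chain: "p t j \<le> c ^ m * p (t - m) j" if "m \<le> d" "t - m \<ge> 1" "j \<in> {1..K}" "m < t" for m j
      using that
    proof (induction m)
      case 0 then show ?case by simp
    next
      case (Suc m)
      have tm: "t - Suc m + 1 = t - m" using Suc.prems by simp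
      have "p (t - m) j \<le> c * p (t - Suc m) j"
        using less.IH[of "t - Suc m"] Suc.prems tm by force
      then have "c ^ m * p (t - m) j \<le> c ^ m * (c * p (t - Suc m) j)"
        using cpos by (intro mult_left_mono) auto
      moreover have "p t j \<le> c ^ m * p (t - m) j" using Suc by simp
      ultimately show ?case by (simp add: algebra_simps)
    qed
    have pL: "p t j * L t j \<le> exp 1" if j: "j \<in> {1..K}" for j
    proof (cases "t > d")
      case True
      then have s: "t - d \<ge> 1" by simp
      have q: "q (t - d) j \<ge> p (t - d) j" using assms(9)[OF s j] p_def by simp
      have lb: "l (t - d) j * B (t - d) j \<le> 1"
        using assms(7)[OF s j] assms(8)[OF s j] by auto
      have lb0: "l (t - d) j * B (t - d) j \<ge> 0"
        using assms(7)[OF s j] assms(8)[OF s j] by auto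
      have "L t j = l (t - d) j * B (t - d) j / q (t - d) j"
        using True by (simp add: L_def loss_est_def)
      also have "\<dots> \<le> 1 / q (t - d) j"
        using lb q ppos[of "t-d" j] by (intro divide_right_mono) auto
      also have "\<dots> \<le> 1 / p (t - d) j"
        using q ppos[of "t-d" j] by (intro divide_left_mono) auto
      finally have Lb: "L t j \<le> 1 / p (t - d) j" .
      have "p t j * L t j \<le> p t j * (1 / p (t - d) j)"
        using Lb ppos[of t j] by (intro mult_left_mono) auto
      also have "\<dots> \<le> c ^ d * p (t - d) j * (1 / p (t - d) j)"
        using chain[of d j] s j True ppos[of "t-d" j] by (intro mult_right_mono) auto
      also have "\<dots> = c ^ d" using ppos[of "t-d" j] by simp
      also have "\<dots> \<le> exp 1" using pow_le_e[OF dpos] by (simp add: c_def)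
      finally show ?thesis .
    next
      case False then show ?thesis by (simp add: L_def loss_est_def)
    qed
    have tS: "t = Suc (t - 1)" using less.prems by simp
    have wt1: "w t j = p t j * exp (- \<eta> * L t j)" for j
      using w_suc[of "t - 1" j] tS by metis
    have "(\<Sum>j\<in>{1..K}. w t j) \<ge> (\<Sum>j\<in>{1..K}. p t j - \<eta> * (p t j * L t j))"
    proof (rule sum_mono)
      fix j assume j: "j \<in> {1..K}"
      have "exp (- \<eta> * L t j) \<ge> 1 + (- \<eta> * L t j)" by (rule exp_ge_add_one_self)
      then have "p t j * exp (- \<eta> * L t j) \<ge> p t j * (1 - \<eta> * L t j)"
        using ppos[of t j] by (intro mult_left_mono) auto
      then show "p t j - \<eta> * (p t j * L t j) \<le> w t j" using wt1[of j]
        by (simp add: algebra_simps)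
    qed
    also have "(\<Sum>j\<in>{1..K}. p t j - \<eta> * (p t j * L t j)) = 1 - \<eta> * (\<Sum>j\<in>{1..K}. p t j * L t j)"
      using psum by (simp add: sum_subtractf sum_distrib_left)
    finally have W1: "(\<Sum>j\<in>{1..K}. w t j) \<ge> 1 - \<eta> * (\<Sum>j\<in>{1..K}. p t j * L t j)" .
    have "(\<Sum>j\<in>{1..K}. p t j * L t j) \<le> (\<Sum>j\<in>{1..K}. exp 1)"
      by (rule sum_mono) (rule pL)
    then have SL: "(\<Sum>j\<in>{1..K}. p t j * L t j) \<le> real K * exp 1" by simp
    have "\<eta> * (\<Sum>j\<in>{1..K}. p t j * L t j) \<le> \<eta> * (real K * exp 1)"
      using SL assms(5) by (intro mult_left_mono) auto
    also have "\<dots> \<le> 1 / (real d + 1)"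
    proof -
      have pos: "real K * exp 1 > 0" using K by simp
      have "\<eta> * (real K * exp 1) \<le> 1 / (real K * exp 1 * (real d + 1)) * (real K * exp 1)"
        using assms(6) pos by (intro mult_right_mono) auto
      also have "\<dots> = 1 / (real d + 1)" using pos K by (simp add: add_pos_pos)
      finally show ?thesis .
    qed
    finally have W1': "(\<Sum>j\<in>{1..K}. w t j) \<ge> 1 - 1 / (real d + 1)"
      using W1 by linarith
    have "1 - 1 / (real d + 1) = real d / (real d + 1)" by (simp add: field_simps)
    then have W2: "(\<Sum>j\<in>{1..K}. w t j) \<ge> real d / (real d + 1)" using W1' by simp
    show ?case
    proof
      fix i assume i: "i \<in> {1..K}"
      have "p (t + 1) i \<le> ptilde K \<delta> (w t) i"
        using p_eq[of "t+1"] pnorm_le_ptilde[OF K dl] wpos by simp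
      moreover have "w t i / (\<Sum>j\<in>{1..K}. w t j) \<le> c * p t i"
      proof -
        have wle: "w t i \<le> p t i"
          using wt1[of i] Lnn[OF i] ppos[of t i] assms(5)
          by (simp add: mult_le_cancel_left1)
        have dpos': "real d / (real d + 1) > 0" using dpos by simp
        have "w t i / (\<Sum>j\<in>{1..K}. w t j) \<le> p t i / (real d / (real d + 1))"
          using wle W2 dpos' wpos[of t i] by (intro frac_le) auto
        also have "\<dots> = c * p t i" using dpos by (simp add: c_def field_simps)
        finally show ?thesis .
      qed
      moreover have "\<delta> / real K \<le> c * p t i"
      proof -
        have "\<delta> / real K = (1 + \<delta>) * (\<delta> / real K / (1 + \<delta>))" using dl by simp
        also have "\<dots> \<le> c * (\<delta> / real K / (1 + \<delta>))"
          using assms(4) dl K by (intro mult_right_mono) (auto simp: c_def)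
        also have "\<dots> \<le> c * p t i" using pge cpos by (intro mult_left_mono) auto
        finally show ?thesis .
      qed
      ultimately show "p (t + 1) i \<le> c * p t i" unfolding ptilde_def by linarith
    qed
  qed
  then show ?thesis by (simp add: p_def c_def)
qed

end
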